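(* In the standing setup, assume in addition that $A$ is generic (three pairwise distinct double eigenvalues) and that $\det f_0'(x)$ is not identically zero. Then for all $x\in\mathbb R^6$, $$(f_0'(x))^2=p_0(x)I+\sum_{i=1}^3 q_i(x)B_i^{\rm T},$$ where $p_0(x)=\tfrac18\operatorname{tr}(f_0'(x))^2$ and $q_i(x)=\tfrac18\operatorname{tr}\big(B_i^{\rm T}(f_0'(x))^2\big)=\tfrac18\operatorname{tr}\big(f_0'(x)g_i'(x)\big)$, with $g_i=B_i^{\rm T}f_0$.
   Context: Standing setup: $J=\begin{pmatrix}0&I_3\\-I_3&0\end{pmatrix}$ ($6\times6$). $A$ is a fixed real $6\times 6$ skew-Hamiltonian matrix ($A^{\rm T}J=JA$). $H_0$ is a homogeneous cubic polynomial on $\mathbb R^6$ with $A\nabla^2H_0(x)=\nabla^2H_0(x)A^{\rm T}$ for all $x$ ($\nabla^2$ = Hesse matrix), $H_1,H_2$ homogeneous cubic polynomials with $\nabla H_1=A\nabla H_0$, $\nabla H_2=A\nabla H_1$, $f_i=J\nabla H_i$, primes denote Jacobi matrices. Genericity: the characteristic polynomial of $A$ (a square of a cubic) has three pairwise distinct roots $\lambda_1,\lambda_2,\lambda_3$, each a double eigenvalue. $B_i=\alpha_iI+\beta_iA+\gamma_iA^2$ ($i=1,2,3$), where $\alpha_i+\beta_i\lambda+\gamma_i\lambda^2$ is the unique polynomial of degree $\le 2$ equal to $-1$ at $\lambda_i$ and to $1$ at the other two eigenvalues; then $B_i^2=I$ and $B_1+B_2+B_3=I$. *)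

theory Defs
  imports "HOL-Analysis.Analysis"
begin

text \<open>Phase space R^6 = real^6; index type 6 has elements 0,...,5 (ordered).
  Coordinates 0,1,2 are q, coordinates 3,4,5 are p.\<close>

text \<open>The standard symplectic matrix J = [[0, I_3], [-I_3, 0]].\<close>
definition Jmat :: "real^6^6" where
  "Jmat = (\<chi> i j. if j = i + 3 then (if i < 3 then 1 else -1) else 0)"

definition hom_cubic :: "(real^6 \<Rightarrow> real) \<Rightarrow> bool" where
  "hom_cubic H \<longleftrightarrow> (\<exists>c :: 6 \<Rightarrow> 6 \<Rightarrow> 6 \<Rightarrow> real.
      \<forall>x. H x = (\<Sum>i\<in>UNIV. \<Sum>j\<in>UNIV. \<Sum>k\<in>UNIV. c i j k * x$i * x$j * x$k))"

definition pderiv :: "(real^'n \<Rightarrow> real) \<Rightarrow> real^'n \<Rightarrow> 'n \<Rightarrow> real" where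
  "pderiv H x j = deriv (\<lambda>t. H (x + t *\<^sub>R axis j 1)) 0"

definition grad :: "(real^'n \<Rightarrow> real) \<Rightarrow> real^'n \<Rightarrow> real^'n" where
  "grad H x = (\<chi> j. pderiv H x j)"

definition jac :: "(real^'n \<Rightarrow> real^'m) \<Rightarrow> real^'n \<Rightarrow> real^'n^'m" where
  "jac F x = (\<chi> i j. pderiv (\<lambda>y. F y $ i) x j)"

definition hess :: "(real^'n \<Rightarrow> real) \<Rightarrow> real^'n \<Rightarrow> real^'n^'n" where
  "hess H x = jac (grad H) x"

end

theory Submission
  imports Defs
begin

lemma exhaust_6:
  fixes x :: 6
  shows "x = 0 \<or> x = 1 \<or> x = 2 \<or> x = 3 \<or> x = 4 \<or> x = 5"
proof (induct x)
  case (of_int z)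
  then have "z = 0 \<or> z = 1 \<or> z = 2 \<or> z = 3 \<or> z = 4 \<or> z = 5" by fastforce
  then show ?case by auto
qed
lemma UNIV6: "(UNIV::6 set) = {0,1,2,3,4,5}" using exhaust_6 by auto
lemma forall6: "(\<forall>i::6. P i) \<longleftrightarrow> P 0 \<and> P 1 \<and> P 2 \<and> P 3 \<and> P 4 \<and> P 5"
  apply (rule iffI)
   apply simp
  apply (rule allI)
  subgoal for i using exhaust_6[of i] by auto
  done
lemma sum6: "(\<Sum>i\<in>(UNIV::6 set). f i) = f 0 + f 1 + f 2 + f 3 + f 4 + f 5"
  apply (simp only: UNIV6)
  apply (subst sum.insert, simp, simp)+
  apply simp
  apply (simp add: ac_simps)
  done

lemma lt3: "(0::6) < 3" "(1::6) < 3" "(2::6) < 3" "\<not> (3::6) < 3" "\<not> (4::6) < 3" "\<not> (5::6) < 3"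
  by (simp_all add: less_bit0_def bit0.Rep_0 bit0.Rep_1 bit0.Rep_numeral)

lemma J_sq: "Jmat ** Jmat = - mat 1"
  unfolding vec_eq_iff forall6 by (simp add: Jmat_def matrix_matrix_mult_def mat_def sum6 lt3)

lemma J_tr: "transpose Jmat = - Jmat"
  unfolding vec_eq_iff forall6 by (simp add: Jmat_def transpose_def lt3)

lemma skew_entries:
  fixes C :: "real^6^6"
  assumes "transpose C ** Jmat = Jmat ** C"
  shows
   "C$3$3 = C$0$0" "C$3$4 = C$1$0" "C$3$5 = C$2$0"
   "C$4$3 = C$0$1" "C$4$4 = C$1$1" "C$4$5 = C$2$1"
   "C$5$3 = C$0$2" "C$5$4 = C$1$2" "C$5$5 = C$2$2"
   "C$0$3 = 0" "C$1$4 = 0" "C$2$5 = 0" "C$1$3 = - C$0$4" "C$2$3 = - C$0$5" "C$2$4 = - C$1$5"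
   "C$3$0 = 0" "C$4$1 = 0" "C$5$2 = 0" "C$4$0 = - C$3$1" "C$5$0 = - C$3$2" "C$5$1 = - C$4$2"
proof -
  have "\<forall>i j. (transpose C ** Jmat)$i$j = (Jmat ** C)$i$j" using assms by simp
  then have H: "\<forall>i j. (\<Sum>k\<in>UNIV. C$k$i * Jmat$k$j) = (\<Sum>k\<in>UNIV. Jmat$i$k * C$k$j)"
    by (simp add: matrix_matrix_mult_def transpose_def)
  note H' = H[unfolded forall6, simplified sum6 Jmat_def vec_lambda_beta lt3, simplified]
  show 
   "C$3$3 = C$0$0" "C$3$4 = C$1$0" "C$3$5 = C$2$0"
   "C$4$3 = C$0$1" "C$4$4 = C$1$1" "C$4$5 = C$2$1"
   "C$5$3 = C$0$2" "C$5$4 = C$1$2" "C$5$5 = C$2$2"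
   "C$0$3 = 0" "C$1$4 = 0" "C$2$5 = 0" "C$1$3 = - C$0$4" "C$2$3 = - C$0$5" "C$2$4 = - C$1$5"
   "C$3$0 = 0" "C$4$1 = 0" "C$5$2 = 0" "C$4$0 = - C$3$1" "C$5$0 = - C$3$2" "C$5$1 = - C$4$2"
    using H' by linarith+
qed

definition pe1 :: "real^6^6 \<Rightarrow> real" where "pe1 C = C$0$0 + C$1$1 + C$2$2"
definition pe2 :: "real^6^6 \<Rightarrow> real" where "pe2 C = ((C$0$0) * (C$1$1) + (C$0$0) * (C$2$2) - (C$0$1) * (C$1$0) - (C$0$2) * (C$2$0) + (C$1$1) * (C$2$2) - (C$1$2) * (C$2$1) + (C$0$4) * (C$3$1) + (C$0$5) * (C$3$2) + (C$1$5) * (C$4$2))"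
definition pe3 :: "real^6^6 \<Rightarrow> real" where "pe3 C = ((C$0$0) * (C$1$1) * (C$2$2) - (C$0$0) * (C$1$2) * (C$2$1) + (C$0$0) * (C$1$5) * (C$4$2) - (C$0$1) * (C$1$0) * (C$2$2) + (C$0$1) * (C$1$2) * (C$2$0) - (C$0$1) * (C$1$5) * (C$3$2) + (C$0$2) * (C$1$0) * (C$2$1) - (C$0$2) * (C$1$1) * (C$2$0) + (C$0$2) * (C$1$5) * (C$3$1) - (C$1$0) * (C$0$5) * (C$4$2) + (C$1$1) * (C$0$5) * (C$3$2) - (C$1$2) * (C$0$5) * (C$3$1) + (C$2$0) * (C$0$4) * (C$4$2) - (C$2$1) * (C$0$4) * (C$3$2) + (C$2$2) * (C$0$4) * (C$3$1))"

lemma pfch: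
  fixes C :: "real^6^6"
  assumes "transpose C ** Jmat = Jmat ** C"
  shows "(C**C)**C - pe1 C *\<^sub>R (C**C) + pe2 C *\<^sub>R C - pe3 C *\<^sub>R mat 1 = 0"
  unfolding vec_eq_iff forall6
  by (simp add: matrix_matrix_mult_def mat_def sum6 skew_entries[OF assms] pe1_def pe2_def pe3_def; simp add: algebra_simps)

lemma mat_mul_neg_right: "(X::real^'n^'m) ** (- Y) = - (X ** Y)"
  by (simp add: vec_eq_iff matrix_matrix_mult_def sum_negf)
lemma mat_mul_neg_left: "(- X::real^'n^'m) ** Y = - (X ** Y)"
  by (simp add: vec_eq_iff matrix_matrix_mult_def sum_negf)

lemma mat_vec_neg: "(- X::real^'n^'m) *v x = - (X *v x)"
  by (simp add: vec_eq_iff matrix_vector_mult_def sum_negf)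

lemma dot_tr: fixes K :: "real^'n^'m" shows "(K *v u) \<bullet> y = u \<bullet> (transpose K *v y)"
proof -
  have "(K *v u) \<bullet> y = (\<Sum>i\<in>UNIV. \<Sum>j\<in>UNIV. K$i$j * u$j * y$i)"
    by (simp add: inner_vec_def matrix_vector_mult_def sum_distrib_right)
  also have "\<dots> = (\<Sum>j\<in>UNIV. \<Sum>i\<in>UNIV. K$i$j * u$j * y$i)" by (rule sum.swap)
  also have "\<dots> = u \<bullet> (transpose K *v y)"
    by (simp add: inner_vec_def matrix_vector_mult_def transpose_def sum_distrib_left mult_ac)
  finally show ?thesis .
qed

definition omega :: "real^6 \<Rightarrow> real^6 \<Rightarrow> real" where
  "omega u v = u \<bullet> (Jmat *v v)"

lemma om_self: "omega u u = 0"
  by (simp add: omega_def inner_vec_def matrix_vector_mult_def sum6 Jmat_def lt3)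

lemma om_anti: "omega u v = - omega v u"
  by (simp add: omega_def inner_vec_def matrix_vector_mult_def sum6 Jmat_def lt3)

lemma om_lin:
  "omega u (x + y) = omega u x + omega u y"
  "omega u (x - y) = omega u x - omega u y"
  "omega u (c *\<^sub>R x) = c * omega u x"
  "omega (x + y) v = omega x v + omega y v"
  "omega (x - y) v = omega x v - omega y v"
  "omega (c *\<^sub>R x) v = c * omega x v"
  "omega u 0 = 0" "omega 0 v = 0"
  by (simp_all add: omega_def matrix_vector_right_distrib matrix_vector_mult_diff_distrib
      matrix_vector_mult_scaleR inner_add_left inner_add_right inner_diff_left inner_diff_right)

lemma skew_T:
  fixes A :: "real^6^6"
  assumes "transpose A ** Jmat = Jmat ** A"
  shows "A ** Jmat = Jmat ** transpose A"
proof -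
  have "Jmat ** (transpose A ** Jmat) ** Jmat = Jmat ** (Jmat ** A) ** Jmat"
    using assms by simp
  then have "(Jmat ** transpose A) ** (Jmat ** Jmat) = (Jmat ** Jmat) ** (A ** Jmat)"
    by (simp add: matrix_mul_assoc)
  then have "- (Jmat ** transpose A) = - (A ** Jmat)"
    by (simp add: J_sq mat_mul_neg_left mat_mul_neg_right)
  then show ?thesis by simp
qed

lemma om_T:
  fixes A :: "real^6^6"
  assumes "A ** Jmat = Jmat ** transpose A"
  shows "omega (transpose A *v u) v = omega u (transpose A *v v)"
proof -
  have "omega (transpose A *v u) v = u \<bullet> (A *v (Jmat *v v))"
    by (simp add: omega_def dot_tr dot_lmul_matrix)
  also have "\<dots> = u \<bullet> ((Jmat ** transpose A) *v v)"
    by (simp add: matrix_vector_mul_assoc assms)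
  also have "\<dots> = omega u (transpose A *v v)"
    by (simp only: omega_def matrix_vector_mul_assoc)
  finally show ?thesis .
qed

lemma om_M:
  fixes S :: "real^6^6"
  assumes "transpose S = S"
  shows "omega ((Jmat ** S) *v u) v = - omega u ((Jmat ** S) *v v)"
proof -
  have "omega ((Jmat ** S) *v u) v = (S *v u) \<bullet> ((transpose Jmat ** Jmat) *v v)"
    by (simp add: omega_def dot_tr matrix_vector_mul_assoc[symmetric])
  also have "\<dots> = (S *v u) \<bullet> v"
    by (simp add: J_tr J_sq mat_mul_neg_left)
  also have "\<dots> = u \<bullet> (S *v v)" by (simp add: dot_tr assms)
  finally have 1: "omega ((Jmat ** S) *v u) v = u \<bullet> (S *v v)" .
  have "omega u ((Jmat ** S) *v v) = u \<bullet> ((Jmat ** Jmat) *v (S *v v))"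
    by (simp add: omega_def matrix_vector_mul_assoc matrix_mul_assoc)
  also have "\<dots> = - (u \<bullet> (S *v v))"
    by (simp add: J_sq mat_vec_neg)
  finally show ?thesis using 1 by simp
qed

definition Pj :: "real^'n^'n \<Rightarrow> real \<Rightarrow> real \<Rightarrow> real \<Rightarrow> real^'n \<Rightarrow> real^'n" where
  "Pj T a b c w = (1/((a-b)*(a-c))) *\<^sub>R (T *v (T *v w) - (b+c) *\<^sub>R (T *v w) + (b*c) *\<^sub>R w)"

definition cub :: "real^'n^'n \<Rightarrow> real \<Rightarrow> real \<Rightarrow> real \<Rightarrow> bool" where
  "cub T a b c \<longleftrightarrow> (\<forall>w. T *v (T *v (T *v w)) = (a+b+c) *\<^sub>R (T *v (T *v w))
      - (a*b+a*c+b*c) *\<^sub>R (T *v w) + (a*b*c) *\<^sub>R w)"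

lemma cub_perm: "cub T a b c \<Longrightarrow> cub T b a c" "cub T a b c \<Longrightarrow> cub T c a b"
  unfolding cub_def by (simp_all add: algebra_simps)

lemma Pj_ev:
  assumes "cub T a b c" "a \<noteq> b" "a \<noteq> c"
  shows "T *v Pj T a b c w = a *\<^sub>R Pj T a b c w"
proof -
  have d: "(a-b)*(a-c) \<noteq> 0" using assms by simp
  have "T *v Pj T a b c w = (1/((a-b)*(a-c))) *\<^sub>R (T *v (T *v (T *v w)) - (b+c) *\<^sub>R (T *v (T *v w)) + (b*c) *\<^sub>R (T *v w))"
    by (simp add: Pj_def matrix_vector_mult_scaleR matrix_vector_right_distrib matrix_vector_mult_diff_distrib)
  also have "\<dots> = (1/((a-b)*(a-c))) *\<^sub>R ((a+b+c) *\<^sub>R (T *v (T *v w))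
      - (a*b+a*c+b*c) *\<^sub>R (T *v w) + (a*b*c) *\<^sub>R w - (b+c) *\<^sub>R (T *v (T *v w)) + (b*c) *\<^sub>R (T *v w))"
    using assms(1) unfolding cub_def by simp
  also have "\<dots> = a *\<^sub>R Pj T a b c w"
    unfolding Pj_def using d by (simp add: vec_eq_iff field_simps)
  finally show ?thesis .
qed

lemma Pj_eig:
  assumes "T *v u = d *\<^sub>R u"
  shows "Pj T a b c u = ((d-b)*(d-c)/((a-b)*(a-c))) *\<^sub>R u"
proof -
  have "T *v (T *v u) = T *v (d *\<^sub>R u)" by (simp only: assms)
  then have TTu: "T *v (T *v u) = (d*d) *\<^sub>R u" by (simp only: matrix_vector_mult_scaleR assms scaleR_scaleR)
  have "T *v (T *v u) - (b+c) *\<^sub>R (T *v u) + (b*c) *\<^sub>R u = ((d-b)*(d-c)) *\<^sub>R u"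
    by (subst TTu, subst assms, simp add: vec_eq_iff algebra_simps)
  then show ?thesis unfolding Pj_def by simp
qed

lemma scal3:
  fixes a b c x y z :: real
  assumes "a \<noteq> b" "a \<noteq> c" "b \<noteq> c"
  shows "(1/((a-b)*(a-c))) * (x - (b+c)*y + b*c*z) + (1/((b-a)*(b-c))) * (x - (a+c)*y + a*c*z)
     + (1/((c-a)*(c-b))) * (x - (a+b)*y + a*b*z) = z"
proof -
  have d: "a - b \<noteq> 0" "a - c \<noteq> 0" "b - c \<noteq> 0" "b - a \<noteq> 0" "c - a \<noteq> 0" "c - b \<noteq> 0" using assms by auto
  show ?thesis using d by (simp add: divide_simps) (simp add: algebra_simps)
qed

lemma Pj_sum:
  assumes "a \<noteq> b" "a \<noteq> c" "b \<noteq> c"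
  shows "Pj T a b c w + Pj T b a c w + Pj T c a b w = w"
proof (rule vec_eq_iff[THEN iffD2], rule allI)
  fix i
  show "(Pj T a b c w + Pj T b a c w + Pj T c a b w) $ i = w $ i"
    unfolding Pj_def vector_add_component vector_scaleR_component vector_minus_component real_scaleR_def
    by (rule scal3[OF assms])
qed

lemma basis_lemma:
  fixes col rowv :: "'n::finite \<Rightarrow> real^'n"
  assumes "\<forall>a b. rowv a \<bullet> col b = (if a = b then 1 else 0)"
  shows "\<forall>w. w = (\<Sum>b\<in>UNIV. (rowv b \<bullet> w) *\<^sub>R col b)"
    and "\<forall>X::real^'n^'n. trace X = (\<Sum>b\<in>UNIV. rowv b \<bullet> (X *v col b))"
proof -
  define U :: "real^'n^'n" where "U = (\<chi> i j. col j $ i)"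
  define Y :: "real^'n^'n" where "Y = (\<chi> a j. rowv a $ j)"
  have "Y ** U = mat 1"
    using assms by (simp add: vec_eq_iff U_def Y_def matrix_matrix_mult_def mat_def inner_vec_def)
  then have UY: "U ** Y = mat 1" by (rule matrix_left_right_inverse1)
  show "\<forall>w. w = (\<Sum>b\<in>UNIV. (rowv b \<bullet> w) *\<^sub>R col b)"
  proof
    fix w :: "real^'n"
    have "w = U *v (Y *v w)" by (simp add: matrix_vector_mul_assoc UY)
    also have "\<dots> = (\<Sum>b\<in>UNIV. (rowv b \<bullet> w) *\<^sub>R col b)"
      by (simp add: vec_eq_iff U_def Y_def matrix_vector_mult_def inner_vec_def sum_component mult.commute)
    finally show "w = (\<Sum>b\<in>UNIV. (rowv b \<bullet> w) *\<^sub>R col b)" .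
  qed
  show "\<forall>X::real^'n^'n. trace X = (\<Sum>b\<in>UNIV. rowv b \<bullet> (X *v col b))"
  proof
    fix X :: "real^'n^'n"
    have "trace X = trace ((X ** U) ** Y)" by (simp add: matrix_mul_assoc[symmetric] UY)
    also have "\<dots> = trace (Y ** (X ** U))" by (rule trace_mul_sym)
    also have "\<dots> = (\<Sum>b\<in>UNIV. rowv b \<bullet> (X *v col b))"
      by (simp add: trace_def U_def Y_def matrix_matrix_mult_def matrix_vector_mult_def inner_vec_def)
    finally show "trace X = (\<Sum>b\<in>UNIV. rowv b \<bullet> (X *v col b))" .
  qed
qed

lemma om_Tr:
  assumes Tsa: "\<forall>u v. omega (T *v u) v = omega u (T *v v)" and "T *v u = a *\<^sub>R u"
  shows "omega u (T *v x) = a * omega u x"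
  using Tsa[rule_format, of u x] assms(2) by (simp add: om_lin)

lemma mat_vec_neg_r: "(X::real^'n^'m) *v (- x) = - (X *v x)"
  by (simp add: vec_eq_iff matrix_vector_mult_def sum_negf)

lemma om_Jnz: "u \<noteq> 0 \<Longrightarrow> omega u (- (Jmat *v u)) \<noteq> 0"
proof -
  assume "u \<noteq> 0"
  have "omega u (- (Jmat *v u)) = - (u \<bullet> ((Jmat ** Jmat) *v u))"
    by (simp add: omega_def matrix_vector_mul_assoc[symmetric] mat_vec_neg_r)
  also have "\<dots> = u \<bullet> u" by (simp add: J_sq mat_vec_neg)
  finally show ?thesis using \<open>u \<noteq> 0\<close> by simp
qed

lemma pair_exists:
  assumes cub: "cub T a b c" and ab: "a \<noteq> b" "a \<noteq> c"
    and Tsa: "\<forall>u v. omega (T *v u) v = omega u (T *v v)"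
    and ev: "\<exists>u. u \<noteq> 0 \<and> T *v u = a *\<^sub>R u"
  shows "\<exists>u v. T *v u = a *\<^sub>R u \<and> T *v v = a *\<^sub>R v \<and> omega u v \<noteq> 0"
proof -
  obtain u where u: "u \<noteq> 0" "T *v u = a *\<^sub>R u" using ev by blast
  define w where "w = - (Jmat *v u)"
  have wnz: "omega u w \<noteq> 0" unfolding w_def by (rule om_Jnz[OF u(1)])
  define v where "v = Pj T a b c w"
  have Tv: "T *v v = a *\<^sub>R v" unfolding v_def by (rule Pj_ev[OF cub ab])
  have r: "\<And>x. omega u (T *v x) = a * omega u x" by (rule om_Tr[OF Tsa u(2)])
  have d: "(a-b)*(a-c) \<noteq> 0" using ab by simp
  have "omega u v = (1/((a-b)*(a-c))) * (omega u (T *v (T *v w)) - (b+c) * omega u (T *v w) + (b*c) * omega u w)"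
    unfolding v_def Pj_def by (simp only: om_lin)
  also have "\<dots> = (1/((a-b)*(a-c))) * (a * (a * omega u w) - (b+c) * (a * omega u w) + (b*c) * omega u w)"
    by (simp only: r)
  also have "\<dots> = omega u w"
  proof -
    have e: "a * (a * omega u w) - (b+c) * (a * omega u w) + (b*c) * omega u w = ((a-b)*(a-c)) * omega u w"
      by (simp add: algebra_simps)
    show ?thesis unfolding e using d by simp
  qed
  finally have "omega u v \<noteq> 0" using wnz by simp
  then show ?thesis using u(2) Tv by blast
qed

lemma om_ortho:
  assumes Tsa: "\<forall>u v. omega (T *v u) v = omega u (T *v v)"
    and "T *v x = p *\<^sub>R x" "T *v y = q *\<^sub>R y" "p \<noteq> q"
  shows "omega x y = 0"
proof -
  have "p * omega x y = q * omega x y"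
    using Tsa[rule_format, of x y] assms(2,3) by (simp add: om_lin)
  then show ?thesis using assms(4) by simp
qed

lemma block:
  assumes Mham: "\<forall>u v. omega (M *v u) v = - omega u (M *v v)"
    and comm: "\<forall>w. M *v (T *v w) = T *v (M *v w)"
    and u: "T *v u = l *\<^sub>R u" and v: "T *v v = l *\<^sub>R v" and g: "omega u v \<noteq> 0"
    and dec: "\<forall>w. T *v w = l *\<^sub>R w \<longrightarrow> w = (omega w v / omega u v) *\<^sub>R u + (omega u w / omega u v) *\<^sub>R v"
  shows "\<forall>w. T *v w = l *\<^sub>R w \<longrightarrow> M *v (M *v w) =
     ((omega (M *v u) v / omega u v)^2 + (omega (M *v v) v / omega u v) * (omega u (M *v u) / omega u v)) *\<^sub>R w"
proof (intro allI impI)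
  fix w assume w: "T *v w = l *\<^sub>R w"
  define g where "g = omega u v"
  define a1 where "a1 = omega (M *v u) v / g"
  define b1 where "b1 = omega u (M *v u) / g"
  define a2 where "a2 = omega (M *v v) v / g"
  have eigM: "\<And>x. T *v x = l *\<^sub>R x \<Longrightarrow> T *v (M *v x) = l *\<^sub>R (M *v x)"
    using comm by (metis matrix_vector_mult_scaleR)
  have Mu: "M *v u = a1 *\<^sub>R u + b1 *\<^sub>R v"
    using dec[rule_format, OF eigM[OF u]] unfolding a1_def b1_def g_def .
  have "M *v v = a2 *\<^sub>R u + (omega u (M *v v) / g) *\<^sub>R v"
    using dec[rule_format, OF eigM[OF v]] unfolding a2_def g_def .
  moreover have "omega u (M *v v) = - omega (M *v u) v" using Mham by simp
  ultimately have Mv: "M *v v = a2 *\<^sub>R u + (- a1) *\<^sub>R v"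
    unfolding a1_def by simp
  define k where "k = a1^2 + a2 * b1"
  have MMu: "M *v (M *v u) = k *\<^sub>R u"
    unfolding Mu by (simp add: matrix_vector_right_distrib matrix_vector_mult_scaleR Mu Mv k_def vec_eq_iff algebra_simps power2_eq_square)
  have MMv: "M *v (M *v v) = k *\<^sub>R v"
    unfolding Mv by (simp add: matrix_vector_right_distrib matrix_vector_mult_scaleR Mu Mv k_def vec_eq_iff algebra_simps power2_eq_square)
  have "M *v (M *v w) = M *v (M *v ((omega w v / omega u v) *\<^sub>R u + (omega u w / omega u v) *\<^sub>R v))"
    using dec[rule_format, OF w] by simp
  also have "\<dots> = k *\<^sub>R ((omega w v / omega u v) *\<^sub>R u + (omega u w / omega u v) *\<^sub>R v)"
    by (simp add: matrix_vector_right_distrib matrix_vector_mult_scaleR MMu MMv scaleR_right_distrib ac_simps)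
  also have "\<dots> = k *\<^sub>R w" using dec[rule_format, OF w] by simp
  finally show "M *v (M *v w) = ((omega (M *v u) v / omega u v)^2 + (omega (M *v v) v / omega u v) * (omega u (M *v u) / omega u v)) *\<^sub>R w"
    unfolding k_def a1_def a2_def b1_def g_def .
qed

lemma rdot1: "(c *\<^sub>R (Jmat *v v)) \<bullet> x = c * omega x v"
  by (simp add: omega_def inner_commute)
lemma rdotA: "(Jmat *v v) \<bullet> x = omega x v"
  by (simp add: omega_def inner_commute)
lemma rdotB: "(u v* Jmat) \<bullet> x = omega u x"
  by (simp add: omega_def dot_lmul_matrix)
lemma rdot2: "(c *\<^sub>R (transpose Jmat *v u)) \<bullet> x = c * omega u x"
  by (simp add: rdotB)

lemma decomp6:
  fixes u1 v1 u2 v2 u3 v3 :: "real^6"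
  assumes Tsa: "\<forall>u v. omega (T *v u) v = omega u (T *v v)"
    and dist: "l1 \<noteq> l2" "l1 \<noteq> l3" "l2 \<noteq> l3"
    and e: "T *v u1 = l1 *\<^sub>R u1" "T *v v1 = l1 *\<^sub>R v1"
      "T *v u2 = l2 *\<^sub>R u2" "T *v v2 = l2 *\<^sub>R v2"
      "T *v u3 = l3 *\<^sub>R u3" "T *v v3 = l3 *\<^sub>R v3"
    and g: "omega u1 v1 \<noteq> 0" "omega u2 v2 \<noteq> 0" "omega u3 v3 \<noteq> 0"
  shows "\<forall>w. w = ((omega w v1 / omega u1 v1) *\<^sub>R u1 + (omega u1 w / omega u1 v1) *\<^sub>R v1)
              + ((omega w v2 / omega u2 v2) *\<^sub>R u2 + (omega u2 w / omega u2 v2) *\<^sub>R v2)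
              + ((omega w v3 / omega u3 v3) *\<^sub>R u3 + (omega u3 w / omega u3 v3) *\<^sub>R v3)"
    and "\<forall>X. trace X = (omega (X *v u1) v1 + omega u1 (X *v v1)) / omega u1 v1
                    + (omega (X *v u2) v2 + omega u2 (X *v v2)) / omega u2 v2
                    + (omega (X *v u3) v3 + omega u3 (X *v v3)) / omega u3 v3"
proof -
  define col :: "6 \<Rightarrow> real^6" where "col = (\<lambda>i. if i = 0 then u1 else if i = 1 then v1 else if i = 2 then u2
      else if i = 3 then v2 else if i = 4 then u3 else v3)"
  define rowv :: "6 \<Rightarrow> real^6" where "rowv = (\<lambda>i. if i = 0 then (1/omega u1 v1) *\<^sub>R (Jmat *v v1)
      else if i = 1 then (1/omega u1 v1) *\<^sub>R (transpose Jmat *v u1)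
      else if i = 2 then (1/omega u2 v2) *\<^sub>R (Jmat *v v2)
      else if i = 3 then (1/omega u2 v2) *\<^sub>R (transpose Jmat *v u2)
      else if i = 4 then (1/omega u3 v3) *\<^sub>R (Jmat *v v3)
      else (1/omega u3 v3) *\<^sub>R (transpose Jmat *v u3))"
  have o: "omega u1 u2 = 0" "omega u1 v2 = 0" "omega v1 u2 = 0" "omega v1 v2 = 0"
    "omega u1 u3 = 0" "omega u1 v3 = 0" "omega v1 u3 = 0" "omega v1 v3 = 0"
    "omega u2 u1 = 0" "omega u2 v1 = 0" "omega v2 u1 = 0" "omega v2 v1 = 0"
    "omega u2 u3 = 0" "omega u2 v3 = 0" "omega v2 u3 = 0" "omega v2 v3 = 0"
    "omega u3 u1 = 0" "omega u3 v1 = 0" "omega v3 u1 = 0" "omega v3 v1 = 0"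
    "omega u3 u2 = 0" "omega u3 v2 = 0" "omega v3 u2 = 0" "omega v3 v2 = 0"
    using om_ortho[OF Tsa] e dist by metis+
  have o2: "omega v1 u1 = - omega u1 v1" "omega v2 u2 = - omega u2 v2" "omega v3 u3 = - omega u3 v3"
    by (simp_all add: om_anti[of _ u1] om_anti[of _ u2] om_anti[of _ u3])
  have delta: "\<forall>a b. rowv a \<bullet> col b = (if a = b then 1 else 0)"
    unfolding forall6 using g
    by (simp add: rowv_def col_def rdot1 rdot2 rdotA rdotB o o2 om_self)
  note BL = basis_lemma[OF delta]
  show "\<forall>w. w = ((omega w v1 / omega u1 v1) *\<^sub>R u1 + (omega u1 w / omega u1 v1) *\<^sub>R v1)
              + ((omega w v2 / omega u2 v2) *\<^sub>R u2 + (omega u2 w / omega u2 v2) *\<^sub>R v2)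
              + ((omega w v3 / omega u3 v3) *\<^sub>R u3 + (omega u3 w / omega u3 v3) *\<^sub>R v3)"
  proof
    fix w
    from BL(1) have "w = (\<Sum>b\<in>UNIV. (rowv b \<bullet> w) *\<^sub>R col b)" by blast
    then show "w = ((omega w v1 / omega u1 v1) *\<^sub>R u1 + (omega u1 w / omega u1 v1) *\<^sub>R v1)
              + ((omega w v2 / omega u2 v2) *\<^sub>R u2 + (omega u2 w / omega u2 v2) *\<^sub>R v2)
              + ((omega w v3 / omega u3 v3) *\<^sub>R u3 + (omega u3 w / omega u3 v3) *\<^sub>R v3)"
      by (simp add: sum6 rowv_def col_def rdot1 rdot2 rdotA rdotB add.assoc)
  qed
  show "\<forall>X. trace X = (omega (X *v u1) v1 + omega u1 (X *v v1)) / omega u1 v1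
                    + (omega (X *v u2) v2 + omega u2 (X *v v2)) / omega u2 v2
                    + (omega (X *v u3) v3 + omega u3 (X *v v3)) / omega u3 v3"
  proof
    fix X :: "real^6^6"
    from BL(2) have "trace X = (\<Sum>b\<in>UNIV. rowv b \<bullet> (X *v col b))" by blast
    then show "trace X = (omega (X *v u1) v1 + omega u1 (X *v v1)) / omega u1 v1
                    + (omega (X *v u2) v2 + omega u2 (X *v v2)) / omega u2 v2
                    + (omega (X *v u3) v3 + omega u3 (X *v v3)) / omega u3 v3"
      by (simp add: sum6 rowv_def col_def rdot1 rdot2 rdotA rdotB add_divide_distrib add.assoc)
  qed
qed

lemma trace_helper:
  fixes X :: "real^6^6"
  assumes TR: "trace X = (omega (X *v u1) v1 + omega u1 (X *v v1)) / omega u1 v1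
                    + (omega (X *v u2) v2 + omega u2 (X *v v2)) / omega u2 v2
                    + (omega (X *v u3) v3 + omega u3 (X *v v3)) / omega u3 v3"
    and g: "omega u1 v1 \<noteq> 0" "omega u2 v2 \<noteq> 0" "omega u3 v3 \<noteq> 0"
    and x: "X *v u1 = c1 *\<^sub>R u1" "X *v v1 = c1 *\<^sub>R v1" "X *v u2 = c2 *\<^sub>R u2" "X *v v2 = c2 *\<^sub>R v2"
      "X *v u3 = c3 *\<^sub>R u3" "X *v v3 = c3 *\<^sub>R v3"
  shows "trace X = 2 * (c1 + c2 + c3)"
  unfolding TR x using g by (simp add: om_lin field_simps)

lemma XMM_helper:
  fixes X M :: "real^'n^'n"
  assumes "(M ** M) *v b = k *\<^sub>R b" "X *v b = s *\<^sub>R b"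
  shows "(X ** (M ** M)) *v b = (s * k) *\<^sub>R b"
proof -
  have "(X ** (M ** M)) *v b = X *v ((M ** M) *v b)" by (simp only: matrix_vector_mul_assoc)
  also have "\<dots> = X *v (k *\<^sub>R b)" by (simp only: assms(1))
  also have "\<dots> = (s * k) *\<^sub>R b" by (simp add: matrix_vector_mult_scaleR assms(2))
  finally show ?thesis .
qed

lemma Xeig:
  assumes "\<forall>w. X *v w = w - 2 *\<^sub>R Pj T a b c w" "T *v u = d *\<^sub>R u"
  shows "X *v u = (1 - 2 * ((d-b)*(d-c)/((a-b)*(a-c)))) *\<^sub>R u"
proof -
  have "X *v u = u - 2 *\<^sub>R Pj T a b c u" using assms(1) by blast
  also have "\<dots> = u - 2 *\<^sub>R (((d-b)*(d-c)/((a-b)*(a-c))) *\<^sub>R u)" by (simp only: Pj_eig[OF assms(2)])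
  also have "\<dots> = (1 - 2 * ((d-b)*(d-c)/((a-b)*(a-c)))) *\<^sub>R u" by (simp add: scaleR_diff_left)
  finally show ?thesis .
qed

lemma core:
  fixes T M :: "real^6^6"
  assumes dist: "l1 \<noteq> l2" "l1 \<noteq> l3" "l2 \<noteq> l3"
    and cub: "cub T l1 l2 l3"
    and Tsa: "\<forall>u v. omega (T *v u) v = omega u (T *v v)"
    and Mham: "\<forall>u v. omega (M *v u) v = - omega u (M *v v)"
    and comm: "M ** T = T ** M"
    and ev1: "\<exists>u. u \<noteq> 0 \<and> T *v u = l1 *\<^sub>R u"
    and ev2: "\<exists>u. u \<noteq> 0 \<and> T *v u = l2 *\<^sub>R u"
    and ev3: "\<exists>u. u \<noteq> 0 \<and> T *v u = l3 *\<^sub>R u"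
  shows "\<exists>k1 k2 k3. (\<forall>w. M *v (M *v w) = k1 *\<^sub>R Pj T l1 l2 l3 w + k2 *\<^sub>R Pj T l2 l1 l3 w + k3 *\<^sub>R Pj T l3 l1 l2 w)
     \<and> trace (M ** M) = 2 * (k1 + k2 + k3)
     \<and> (\<forall>X. (\<forall>w. X *v w = w - 2 *\<^sub>R Pj T l1 l2 l3 w) \<longrightarrow> trace (X ** (M ** M)) = 2 * (k1 + k2 + k3) - 4 * k1)
     \<and> (\<forall>X. (\<forall>w. X *v w = w - 2 *\<^sub>R Pj T l2 l1 l3 w) \<longrightarrow> trace (X ** (M ** M)) = 2 * (k1 + k2 + k3) - 4 * k2)
     \<and> (\<forall>X. (\<forall>w. X *v w = w - 2 *\<^sub>R Pj T l3 l1 l2 w) \<longrightarrow> trace (X ** (M ** M)) = 2 * (k1 + k2 + k3) - 4 * k3)"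
proof -
  have cub2: "cub T l2 l1 l3" and cub3: "cub T l3 l1 l2" using cub_perm[OF cub] by auto
  have d': "l2 \<noteq> l1" "l3 \<noteq> l1" "l3 \<noteq> l2" using dist by auto
  obtain u1 v1 where p1: "T *v u1 = l1 *\<^sub>R u1" "T *v v1 = l1 *\<^sub>R v1" "omega u1 v1 \<noteq> 0"
    using pair_exists[OF cub dist(1,2) Tsa ev1] by blast
  obtain u2 v2 where p2: "T *v u2 = l2 *\<^sub>R u2" "T *v v2 = l2 *\<^sub>R v2" "omega u2 v2 \<noteq> 0"
    using pair_exists[OF cub2 d'(1) dist(3) Tsa ev2] by blast
  obtain u3 v3 where p3: "T *v u3 = l3 *\<^sub>R u3" "T *v v3 = l3 *\<^sub>R v3" "omega u3 v3 \<noteq> 0"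
    using pair_exists[OF cub3 d'(2) d'(3) Tsa ev3] by blast
  note D = decomp6[OF Tsa dist p1(1,2) p2(1,2) p3(1,2) p1(3) p2(3) p3(3)]
  have commv: "\<forall>w. M *v (T *v w) = T *v (M *v w)"
    by (simp add: matrix_vector_mul_assoc comm)
  have orth: "\<And>w a b p q. T *v w = p *\<^sub>R w \<Longrightarrow> T *v b = q *\<^sub>R b \<Longrightarrow> p \<noteq> q \<Longrightarrow> omega w b = 0 \<and> omega b w = 0"
    using om_ortho[OF Tsa] by metis
  have dec1: "\<forall>w. T *v w = l1 *\<^sub>R w \<longrightarrow> w = (omega w v1 / omega u1 v1) *\<^sub>R u1 + (omega u1 w / omega u1 v1) *\<^sub>R v1"
  proof (intro allI impI)
    fix w assume w: "T *v w = l1 *\<^sub>R w"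
    have z: "omega w v2 = 0" "omega u2 w = 0" "omega w v3 = 0" "omega u3 w = 0"
      using orth[OF w p2(2) dist(1)] orth[OF w p2(1) dist(1)] orth[OF w p3(2) dist(2)] orth[OF w p3(1) dist(2)] by auto
    show "w = (omega w v1 / omega u1 v1) *\<^sub>R u1 + (omega u1 w / omega u1 v1) *\<^sub>R v1"
      using D(1)[rule_format, of w] z by simp
  qed
  have dec2: "\<forall>w. T *v w = l2 *\<^sub>R w \<longrightarrow> w = (omega w v2 / omega u2 v2) *\<^sub>R u2 + (omega u2 w / omega u2 v2) *\<^sub>R v2"
  proof (intro allI impI)
    fix w assume w: "T *v w = l2 *\<^sub>R w"
    have z: "omega w v1 = 0" "omega u1 w = 0" "omega w v3 = 0" "omega u3 w = 0"
      using orth[OF w p1(2) d'(1)] orth[OF w p1(1) d'(1)] orth[OF w p3(2) dist(3)] orth[OF w p3(1) dist(3)] by auto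
    show "w = (omega w v2 / omega u2 v2) *\<^sub>R u2 + (omega u2 w / omega u2 v2) *\<^sub>R v2"
      using D(1)[rule_format, of w] z by simp
  qed
  have dec3: "\<forall>w. T *v w = l3 *\<^sub>R w \<longrightarrow> w = (omega w v3 / omega u3 v3) *\<^sub>R u3 + (omega u3 w / omega u3 v3) *\<^sub>R v3"
  proof (intro allI impI)
    fix w assume w: "T *v w = l3 *\<^sub>R w"
    have z: "omega w v1 = 0" "omega u1 w = 0" "omega w v2 = 0" "omega u2 w = 0"
      using orth[OF w p1(2) d'(2)] orth[OF w p1(1) d'(2)] orth[OF w p2(2) d'(3)] orth[OF w p2(1) d'(3)] by auto
    show "w = (omega w v3 / omega u3 v3) *\<^sub>R u3 + (omega u3 w / omega u3 v3) *\<^sub>R v3"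
      using D(1)[rule_format, of w] z by simp
  qed
  obtain k1 where B1: "\<forall>w. T *v w = l1 *\<^sub>R w \<longrightarrow> M *v (M *v w) = k1 *\<^sub>R w"
    using block[OF Mham commv p1 dec1] by blast
  obtain k2 where B2: "\<forall>w. T *v w = l2 *\<^sub>R w \<longrightarrow> M *v (M *v w) = k2 *\<^sub>R w"
    using block[OF Mham commv p2 dec2] by blast
  obtain k3 where B3: "\<forall>w. T *v w = l3 *\<^sub>R w \<longrightarrow> M *v (M *v w) = k3 *\<^sub>R w"
    using block[OF Mham commv p3 dec3] by blast
  have MM: "\<forall>w. M *v (M *v w) = k1 *\<^sub>R Pj T l1 l2 l3 w + k2 *\<^sub>R Pj T l2 l1 l3 w + k3 *\<^sub>R Pj T l3 l1 l2 w"
  proof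
    fix w
    have "M *v (M *v w) = M *v (M *v (Pj T l1 l2 l3 w + Pj T l2 l1 l3 w + Pj T l3 l1 l2 w))"
      using Pj_sum[OF dist, of T w] by simp
    also have "\<dots> = k1 *\<^sub>R Pj T l1 l2 l3 w + k2 *\<^sub>R Pj T l2 l1 l3 w + k3 *\<^sub>R Pj T l3 l1 l2 w"
      using B1[rule_format, OF Pj_ev[OF cub dist(1,2)]] B2[rule_format, OF Pj_ev[OF cub2 d'(1) dist(3)]]
        B3[rule_format, OF Pj_ev[OF cub3 d'(2,3)]]
      by (simp add: matrix_vector_right_distrib)
    finally show "M *v (M *v w) = k1 *\<^sub>R Pj T l1 l2 l3 w + k2 *\<^sub>R Pj T l2 l1 l3 w + k3 *\<^sub>R Pj T l3 l1 l2 w" .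
  qed
  have MMv: "(M ** M) *v u1 = k1 *\<^sub>R u1" "(M ** M) *v v1 = k1 *\<^sub>R v1"
     "(M ** M) *v u2 = k2 *\<^sub>R u2" "(M ** M) *v v2 = k2 *\<^sub>R v2"
     "(M ** M) *v u3 = k3 *\<^sub>R u3" "(M ** M) *v v3 = k3 *\<^sub>R v3"
    using B1 B2 B3 p1 p2 p3 by (simp_all add: matrix_vector_mul_assoc[symmetric])
  have trMM: "trace (M ** M) = 2 * (k1 + k2 + k3)"
    by (rule trace_helper[OF D(2)[rule_format] p1(3) p2(3) p3(3) MMv])
  have dn: "l1 - l2 \<noteq> 0" "l1 - l3 \<noteq> 0" "l2 - l3 \<noteq> 0" "l2 - l1 \<noteq> 0" "l3 - l1 \<noteq> 0" "l3 - l2 \<noteq> 0"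
    using dist by auto
  have tr1: "trace (X ** (M ** M)) = 2 * (k1 + k2 + k3) - 4 * k1"
    if X: "\<forall>w. X *v w = w - 2 *\<^sub>R Pj T l1 l2 l3 w" for X
  proof -
    note xe = Xeig[OF X]
    have "trace (X ** (M ** M)) = 2 * ((1 - 2 * ((l1-l2)*(l1-l3)/((l1-l2)*(l1-l3)))) * k1 + (1 - 2 * ((l2-l2)*(l2-l3)/((l1-l2)*(l1-l3)))) * k2 + (1 - 2 * ((l3-l2)*(l3-l3)/((l1-l2)*(l1-l3)))) * k3)"
      by (rule trace_helper[OF D(2)[rule_format] p1(3) p2(3) p3(3)
         XMM_helper[OF MMv(1) xe[OF p1(1)]] XMM_helper[OF MMv(2) xe[OF p1(2)]]
         XMM_helper[OF MMv(3) xe[OF p2(1)]] XMM_helper[OF MMv(4) xe[OF p2(2)]]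
         XMM_helper[OF MMv(5) xe[OF p3(1)]] XMM_helper[OF MMv(6) xe[OF p3(2)]]])
    then show ?thesis using dn by simp
  qed
  have tr2: "trace (X ** (M ** M)) = 2 * (k1 + k2 + k3) - 4 * k2"
    if X: "\<forall>w. X *v w = w - 2 *\<^sub>R Pj T l2 l1 l3 w" for X
  proof -
    note xe = Xeig[OF X]
    have "trace (X ** (M ** M)) = 2 * ((1 - 2 * ((l1-l1)*(l1-l3)/((l2-l1)*(l2-l3)))) * k1 + (1 - 2 * ((l2-l1)*(l2-l3)/((l2-l1)*(l2-l3)))) * k2 + (1 - 2 * ((l3-l1)*(l3-l3)/((l2-l1)*(l2-l3)))) * k3)"
      by (rule trace_helper[OF D(2)[rule_format] p1(3) p2(3) p3(3)
         XMM_helper[OF MMv(1) xe[OF p1(1)]] XMM_helper[OF MMv(2) xe[OF p1(2)]]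
         XMM_helper[OF MMv(3) xe[OF p2(1)]] XMM_helper[OF MMv(4) xe[OF p2(2)]]
         XMM_helper[OF MMv(5) xe[OF p3(1)]] XMM_helper[OF MMv(6) xe[OF p3(2)]]])
    then show ?thesis using dn by simp
  qed
  have tr3: "trace (X ** (M ** M)) = 2 * (k1 + k2 + k3) - 4 * k3"
    if X: "\<forall>w. X *v w = w - 2 *\<^sub>R Pj T l3 l1 l2 w" for X
  proof -
    note xe = Xeig[OF X]
    have "trace (X ** (M ** M)) = 2 * ((1 - 2 * ((l1-l1)*(l1-l2)/((l3-l1)*(l3-l2)))) * k1 + (1 - 2 * ((l2-l1)*(l2-l2)/((l3-l1)*(l3-l2)))) * k2 + (1 - 2 * ((l3-l1)*(l3-l2)/((l3-l1)*(l3-l2)))) * k3)"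
      by (rule trace_helper[OF D(2)[rule_format] p1(3) p2(3) p3(3)
         XMM_helper[OF MMv(1) xe[OF p1(1)]] XMM_helper[OF MMv(2) xe[OF p1(2)]]
         XMM_helper[OF MMv(3) xe[OF p2(1)]] XMM_helper[OF MMv(4) xe[OF p2(2)]]
         XMM_helper[OF MMv(5) xe[OF p3(1)]] XMM_helper[OF MMv(6) xe[OF p3(2)]]])
    then show ?thesis using dn by simp
  qed
  show ?thesis using MM trMM tr1 tr2 tr3 by blast
qed

lemma pderiv_hd:
  fixes F :: "real^'n \<Rightarrow> real"
  assumes "(F has_derivative D) (at x)"
  shows "pderiv F x j = D (axis j 1)"
proof -
  have lin: "linear D" using assms has_derivative_linear by blast
  have h1: "((\<lambda>t::real. x + t *\<^sub>R axis j 1) has_derivative (\<lambda>t. t *\<^sub>R axis j 1)) (at 0)"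
    by (auto intro!: derivative_eq_intros)
  have "((\<lambda>t. F (x + t *\<^sub>R axis j 1)) has_derivative (\<lambda>t. D (t *\<^sub>R axis j 1))) (at 0)"
    using has_derivative_compose[OF h1, of F D] assms by simp
  moreover have "(\<lambda>t. D (t *\<^sub>R axis j 1)) = (\<lambda>t. D (axis j 1) * t)"
    using linear_scale[OF lin] by (auto simp: mult.commute)
  ultimately have "((\<lambda>t. F (x + t *\<^sub>R axis j 1)) has_field_derivative D (axis j 1)) (at 0)"
    by (simp add: has_field_derivative_def)
  then show ?thesis unfolding pderiv_def by (rule DERIV_imp_deriv)
qed

definition Gc :: "(6 \<Rightarrow> 6 \<Rightarrow> 6 \<Rightarrow> real) \<Rightarrow> 6 \<Rightarrow> real^6 \<Rightarrow> real" where
  "Gc c a y = (\<Sum>i\<in>UNIV. \<Sum>j\<in>UNIV. \<Sum>k\<in>UNIV. c i j k *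
      ((axis a 1)$i * y$j * y$k + y$i * (axis a 1)$j * y$k + y$i * y$j * (axis a 1)$k))"

definition DGc :: "(6 \<Rightarrow> 6 \<Rightarrow> 6 \<Rightarrow> real) \<Rightarrow> 6 \<Rightarrow> real^6 \<Rightarrow> real^6 \<Rightarrow> real" where
  "DGc c a x h = (\<Sum>i\<in>UNIV. \<Sum>j\<in>UNIV. \<Sum>k\<in>UNIV. c i j k *
      ((axis a 1)$i * (h$j * x$k + x$j * h$k) + (axis a 1)$j * (h$i * x$k + x$i * h$k)
       + (axis a 1)$k * (h$i * x$j + x$i * h$j)))"

lemma vnth_hd: "((\<lambda>x::real^'n. x$i) has_derivative (\<lambda>h. h$i)) F"
  by (rule bounded_linear.has_derivative[OF bounded_linear_vec_nth has_derivative_ident])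

lemma cubic_hd:
  "((\<lambda>x::real^6. \<Sum>i\<in>UNIV. \<Sum>j\<in>UNIV. \<Sum>k\<in>UNIV. c i j k * x$i * x$j * x$k) has_derivative
     (\<lambda>h. \<Sum>i\<in>UNIV. \<Sum>j\<in>UNIV. \<Sum>k\<in>UNIV. c i j k * (h$i * y$j * y$k + y$i * h$j * y$k + y$i * y$j * h$k))) (at y)"
  apply (intro has_derivative_sum)
  apply (auto intro!: derivative_eq_intros vnth_hd)
  apply (rule ext, simp add: algebra_simps)
  done

lemma Gc_hd: "((Gc c a) has_derivative DGc c a x) (at x)"
  unfolding Gc_def DGc_def
  apply (intro has_derivative_sum)
  apply (auto intro!: derivative_eq_intros vnth_hd)
  apply (rule ext, simp add: algebra_simps)
  done

lemma DGc_sym: "DGc c a x (axis b 1) = DGc c b x (axis a 1)"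
  unfolding DGc_def
  by (intro sum.cong refl) (simp add: algebra_simps)

lemma calc:
  assumes "hom_cubic H0"
  shows "transpose (hess H0 x) = hess H0 x"
    and "jac (\<lambda>y. K *v grad H0 y) x = K ** hess H0 x"
proof -
  obtain c where c: "\<forall>x. H0 x = (\<Sum>i\<in>UNIV. \<Sum>j\<in>UNIV. \<Sum>k\<in>UNIV. c i j k * x$i * x$j * x$k)"
    using assms unfolding hom_cubic_def by blast
  then have H0eq: "H0 = (\<lambda>x. \<Sum>i\<in>UNIV. \<Sum>j\<in>UNIV. \<Sum>k\<in>UNIV. c i j k * x$i * x$j * x$k)" by (intro ext) simp
  have gradG: "grad H0 y $ a = Gc c a y" for y a
    unfolding grad_def H0eq vec_lambda_beta pderiv_hd[OF cubic_hd] Gc_def by simp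
  have gfun: "(\<lambda>y. grad H0 y $ a) = Gc c a" for a by (rule ext) (rule gradG)
  have hessE: "hess H0 x $ a $ b = DGc c a x (axis b 1)" for a b
    unfolding hess_def jac_def vec_lambda_beta gfun by (rule pderiv_hd[OF Gc_hd])
  show "transpose (hess H0 x) = hess H0 x"
    by (simp add: vec_eq_iff transpose_def hessE DGc_sym)
  have jfun: "(\<lambda>y. (K *v grad H0 y) $ i) = (\<lambda>y. \<Sum>l\<in>UNIV. K$i$l * Gc c l y)" for i
    by (rule ext) (simp add: matrix_vector_mult_def gradG)
  have jhd: "((\<lambda>y. \<Sum>l\<in>UNIV. K$i$l * Gc c l y) has_derivative (\<lambda>h. \<Sum>l\<in>UNIV. K$i$l * DGc c l x h)) (at x)" for i
    by (intro has_derivative_sum has_derivative_mult_right Gc_hd)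
  show "jac (\<lambda>y. K *v grad H0 y) x = K ** hess H0 x"
    unfolding vec_eq_iff
  proof (intro allI)
    fix i b
    show "jac (\<lambda>y. K *v grad H0 y) x $ i $ b = (K ** hess H0 x) $ i $ b"
      unfolding jac_def vec_lambda_beta jfun pderiv_hd[OF jhd]
      by (simp add: matrix_matrix_mult_def hessE)
  qed
qed

lemma vander:
  fixes l1 l2 l3 a b c :: real
  assumes d: "l1 \<noteq> l2" "l1 \<noteq> l3" "l2 \<noteq> l3"
    and e1: "l1^3 - a*l1^2 + b*l1 - c = 0"
    and e2: "l2^3 - a*l2^2 + b*l2 - c = 0"
    and e3: "l3^3 - a*l3^2 + b*l3 - c = 0"
  shows "a = l1 + l2 + l3" "b = l1*l2 + l1*l3 + l2*l3" "c = l1*l2*l3"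
proof -
  have "(l1 - l2) * (l1^2 + l1*l2 + l2^2 - a*(l1+l2) + b) = 0"
    using e1 e2 by (simp add: algebra_simps power2_eq_square power3_eq_cube)
  then have q12: "l1^2 + l1*l2 + l2^2 - a*(l1+l2) + b = 0" using d by simp
  have "(l1 - l3) * (l1^2 + l1*l3 + l3^2 - a*(l1+l3) + b) = 0"
    using e1 e3 by (simp add: algebra_simps power2_eq_square power3_eq_cube)
  then have q13: "l1^2 + l1*l3 + l3^2 - a*(l1+l3) + b = 0" using d by simp
  have "(l2 - l3) * (l1 + l2 + l3 - a) = 0"
    using q12 q13 by (simp add: algebra_simps power2_eq_square)
  then show a: "a = l1 + l2 + l3" using d by simp
  show b: "b = l1*l2 + l1*l3 + l2*l3" using q12 a by (simp add: algebra_simps power2_eq_square)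
  show "c = l1*l2*l3" using e1 a b by (simp add: algebra_simps power2_eq_square power3_eq_cube)
qed

lemma eig_of_det:
  fixes T :: "real^'n^'n"
  assumes "det (l *\<^sub>R mat 1 - T) = 0"
  shows "\<exists>u. u \<noteq> 0 \<and> T *v u = l *\<^sub>R u"
proof -
  have "rank (l *\<^sub>R mat 1 - T) \<noteq> CARD('n)" using assms det_eq_0_rank by (metis less_irrefl)
  then obtain u where u: "u \<noteq> 0" "(l *\<^sub>R mat 1 - T) *v u = 0"
    using matrix_nonfull_linear_equations_eq by blast
  have "(l *\<^sub>R mat 1 - T) *v u = l *\<^sub>R u - T *v u"
    by (simp add: matrix_vector_mult_diff_rdistrib scaleR_matrix_vector_assoc[symmetric])
  then show ?thesis using u by (metis eq_iff_diff_eq_0)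
qed

lemma root_of_eig:
  fixes T :: "real^'n^'n"
  assumes cv: "\<forall>w. T *v (T *v (T *v w)) = a *\<^sub>R (T *v (T *v w)) - b *\<^sub>R (T *v w) + c *\<^sub>R w"
    and u: "u \<noteq> 0" "T *v u = l *\<^sub>R u"
  shows "l^3 - a*l^2 + b*l - c = 0"
proof -
  have t2: "T *v (T *v u) = (l*l) *\<^sub>R u" by (simp add: u(2) matrix_vector_mult_scaleR)
  have t3: "T *v (T *v (T *v u)) = (l*l*l) *\<^sub>R u" by (simp add: t2 u(2) matrix_vector_mult_scaleR mult.commute)
  have "(l*l*l) *\<^sub>R u = a *\<^sub>R ((l*l) *\<^sub>R u) - b *\<^sub>R (l *\<^sub>R u) + c *\<^sub>R u"
  proof -
    have eq: "T *v (T *v (T *v u)) = a *\<^sub>R (T *v (T *v u)) - b *\<^sub>R (T *v u) + c *\<^sub>R u"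
      using cv by blast
    show ?thesis unfolding t3[symmetric] t2[symmetric] u(2)[symmetric] by (rule eq)
  qed
  then have "(l^3 - a*l^2 + b*l - c) *\<^sub>R u = 0"
    by (simp add: algebra_simps power2_eq_square power3_eq_cube)
  then show ?thesis using u(1) by simp
qed

lemma Bact:
  fixes T :: "real^'n^'n"
  assumes cub: "cub T a b c" and d: "a \<noteq> b" "a \<noteq> c" "b \<noteq> c"
    and s: "al + be*a + ga*a^2 = s1" "al + be*b + ga*b^2 = s2" "al + be*c + ga*c^2 = s3"
  shows "al *\<^sub>R w + be *\<^sub>R (T *v w) + ga *\<^sub>R (T *v (T *v w))
     = s1 *\<^sub>R Pj T a b c w + s2 *\<^sub>R Pj T b a c w + s3 *\<^sub>R Pj T c a b w"
proof -
  define P1 where "P1 = Pj T a b c w"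
  define P2 where "P2 = Pj T b a c w"
  define P3 where "P3 = Pj T c a b w"
  have ev1: "T *v P1 = a *\<^sub>R P1" unfolding P1_def by (rule Pj_ev[OF cub d(1,2)])
  have ev2: "T *v P2 = b *\<^sub>R P2" unfolding P2_def
    by (rule Pj_ev[OF cub_perm(1)[OF cub]]) (use d in auto)
  have ev3: "T *v P3 = c *\<^sub>R P3" unfolding P3_def
    by (rule Pj_ev[OF cub_perm(2)[OF cub]]) (use d in auto)
  have w: "w = P1 + P2 + P3" unfolding P1_def P2_def P3_def by (rule Pj_sum[OF d, symmetric])
  have Tw: "T *v w = a *\<^sub>R P1 + b *\<^sub>R P2 + c *\<^sub>R P3"
    by (subst w) (simp add: matrix_vector_right_distrib ev1 ev2 ev3)
  have TTw: "T *v (a *\<^sub>R P1 + b *\<^sub>R P2 + c *\<^sub>R P3) = (a*a) *\<^sub>R P1 + (b*b) *\<^sub>R P2 + (c*c) *\<^sub>R P3"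
    by (simp add: matrix_vector_right_distrib matrix_vector_mult_scaleR ev1 ev2 ev3)
  have "al *\<^sub>R w + be *\<^sub>R (T *v w) + ga *\<^sub>R (T *v (T *v w))
     = al *\<^sub>R (P1 + P2 + P3) + be *\<^sub>R (a *\<^sub>R P1 + b *\<^sub>R P2 + c *\<^sub>R P3) + ga *\<^sub>R ((a*a) *\<^sub>R P1 + (b*b) *\<^sub>R P2 + (c*c) *\<^sub>R P3)"
    apply (simp only: Tw TTw)
    apply (subst w)
    apply (rule refl)
    done
  also have "\<dots> = s1 *\<^sub>R P1 + s2 *\<^sub>R P2 + s3 *\<^sub>R P3"
    unfolding s[symmetric] by (simp add: vec_eq_iff algebra_simps power2_eq_square)
  finally show ?thesis unfolding P1_def P2_def P3_def .
qed

lemma transpose_add: "transpose ((X::real^'n^'m) + Y) = transpose X + transpose Y"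
  by (simp add: vec_eq_iff transpose_def)

lemma transpose_diff: "transpose ((X::real^'n^'m) - Y) = transpose X - transpose Y"
  by (simp add: vec_eq_iff transpose_def)

lemma cub_vec:
  fixes T :: "real^'n^'n"
  assumes "(T**T)**T - a *\<^sub>R (T**T) + b *\<^sub>R T - c *\<^sub>R mat 1 = 0"
  shows "T *v (T *v (T *v w)) = a *\<^sub>R (T *v (T *v w)) - b *\<^sub>R (T *v w) + c *\<^sub>R w"
proof -
  have e: "((T**T)**T - a *\<^sub>R (T**T) + b *\<^sub>R T - c *\<^sub>R mat 1) *v w
     = T *v (T *v (T *v w)) - a *\<^sub>R (T *v (T *v w)) + b *\<^sub>R (T *v w) - c *\<^sub>R w"
    by (simp only: matrix_vector_mult_add_rdistrib matrix_vector_mult_diff_rdistrib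
          scaleR_matrix_vector_assoc[symmetric] matrix_vector_mul_assoc[symmetric] matrix_vector_mul_lid)
  have z: "((T**T)**T - a *\<^sub>R (T**T) + b *\<^sub>R T - c *\<^sub>R mat 1) *v w = 0"
    unfolding assms by (simp add: vec_eq_iff matrix_vector_mult_def)
  from e z have "T *v (T *v (T *v w)) - a *\<^sub>R (T *v (T *v w)) + b *\<^sub>R (T *v w) - c *\<^sub>R w = 0" by simp
  then show ?thesis by (simp add: vec_eq_iff algebra_simps)
qed

lemma lin3:
  fixes X p1 p2 p3 w :: "'a::real_vector"
  shows "X = (-1) *\<^sub>R p1 + 1 *\<^sub>R p2 + 1 *\<^sub>R p3 \<Longrightarrow> p1 + p2 + p3 = w \<Longrightarrow> X = w - 2 *\<^sub>R p1"
    and "X = 1 *\<^sub>R p1 + (-1) *\<^sub>R p2 + 1 *\<^sub>R p3 \<Longrightarrow> p1 + p2 + p3 = w \<Longrightarrow> X = w - 2 *\<^sub>R p2"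
    and "X = 1 *\<^sub>R p1 + 1 *\<^sub>R p2 + (-1) *\<^sub>R p3 \<Longrightarrow> p1 + p2 + p3 = w \<Longrightarrow> X = w - 2 *\<^sub>R p3"
  by (auto simp add: algebra_simps scaleR_2)

lemma final_alg:
  fixes w p1 p2 p3 :: "real^'n"
  assumes "p1 + p2 + p3 = w"
  shows "k1 *\<^sub>R p1 + k2 *\<^sub>R p2 + k3 *\<^sub>R p3 = (1/8 * (2*(k1+k2+k3))) *\<^sub>R w
     + ((1/8 * (2*(k1+k2+k3) - 4*k1)) *\<^sub>R (w - 2 *\<^sub>R p1)
      + ((1/8 * (2*(k1+k2+k3) - 4*k2)) *\<^sub>R (w - 2 *\<^sub>R p2)
      + (1/8 * (2*(k1+k2+k3) - 4*k3)) *\<^sub>R (w - 2 *\<^sub>R p3)))"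
  unfolding assms[symmetric] by (simp add: vec_eq_iff field_simps)

theorem mainTheorem7:
  fixes A :: "real^6^6"
    and H0 H1 H2 :: "real^6 \<Rightarrow> real"
    and f0 :: "real^6 \<Rightarrow> real^6"
    and lam \<alpha> \<beta> \<gamma> :: "nat \<Rightarrow> real"
    and B :: "nat \<Rightarrow> real^6^6"
  assumes skewHam: "transpose A ** Jmat = Jmat ** A"
    and H0_cubic: "hom_cubic H0"
    and H0_comm: "\<forall>x. A ** hess H0 x = hess H0 x ** transpose A"
    and H1_cubic: "hom_cubic H1"
    and H2_cubic: "hom_cubic H2"
    and H1_grad: "\<forall>x. grad H1 x = A *v grad H0 x"
    and H2_grad: "\<forall>x. grad H2 x = A *v grad H1 x"
    and f0_def: "\<forall>x. f0 x = Jmat *v grad H0 x"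
    and lam_distinct: "\<forall>i\<in>{1,2,3}. \<forall>j\<in>{1,2,3}. i \<noteq> j \<longrightarrow> lam i \<noteq> lam j"
    and generic: "\<forall>\<mu>. det (\<mu> *\<^sub>R mat 1 - A) = ((\<mu> - lam 1) * (\<mu> - lam 2) * (\<mu> - lam 3))^2"
    and interp: "\<forall>i\<in>{1,2,3}. \<forall>j\<in>{1,2,3}.
        \<alpha> i + \<beta> i * lam j + \<gamma> i * (lam j)^2 = (if i = j then -1 else 1)"
    and B_def: "\<forall>i\<in>{1,2,3}. B i = \<alpha> i *\<^sub>R mat 1 + \<beta> i *\<^sub>R A + \<gamma> i *\<^sub>R (A ** A)"
    and nondeg: "\<exists>x. det (jac f0 x) \<noteq> 0"
  shows "\<forall>x. jac f0 x ** jac f0 x =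
            (1/8 * trace (jac f0 x ** jac f0 x)) *\<^sub>R mat 1
            + (\<Sum>i\<in>{1,2,3::nat}. (1/8 * trace (transpose (B i) ** (jac f0 x ** jac f0 x)))
                                    *\<^sub>R transpose (B i))
         \<and> (\<forall>i\<in>{1,2,3::nat}.
              1/8 * trace (transpose (B i) ** (jac f0 x ** jac f0 x))
              = 1/8 * trace (jac f0 x ** jac (\<lambda>y. transpose (B i) *v f0 y) x))"
proof -
  define T where "T = transpose A"
  define l1 where "l1 = lam 1"
  define l2 where "l2 = lam 2"
  define l3 where "l3 = lam 3"
  have dist: "l1 \<noteq> l2" "l1 \<noteq> l3" "l2 \<noteq> l3"
    using lam_distinct unfolding l1_def l2_def l3_def by auto
  have skT: "A ** Jmat = Jmat ** T" unfolding T_def by (rule skew_T[OF skewHam])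
  have trT: "transpose T = A" by (simp add: T_def)
  have pf: "(T**T)**T - pe1 T *\<^sub>R (T**T) + pe2 T *\<^sub>R T - pe3 T *\<^sub>R mat 1 = 0"
    by (rule pfch) (simp add: trT skT)
  have cv: "\<forall>w. T *v (T *v (T *v w)) = pe1 T *\<^sub>R (T *v (T *v w)) - pe2 T *\<^sub>R (T *v w) + pe3 T *\<^sub>R w"
    using cub_vec[OF pf] by blast
  have ev: "\<exists>u. u \<noteq> 0 \<and> T *v u = lam k *\<^sub>R u" if k: "k \<in> {1,2,3}" for k
  proof -
    have "det (lam k *\<^sub>R mat 1 - A) = 0" using generic[rule_format, of "lam k"] k by auto
    moreover have "transpose (lam k *\<^sub>R mat 1 - A) = lam k *\<^sub>R mat 1 - T"
      by (simp add: transpose_diff transpose_scalar transpose_mat T_def)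
    ultimately have "det (lam k *\<^sub>R mat 1 - T) = 0" by (metis det_transpose)
    then show ?thesis by (rule eig_of_det)
  qed
  have ev1: "\<exists>u. u \<noteq> 0 \<and> T *v u = l1 *\<^sub>R u" using ev[of 1] unfolding l1_def by simp
  have ev2: "\<exists>u. u \<noteq> 0 \<and> T *v u = l2 *\<^sub>R u" using ev[of 2] unfolding l2_def by simp
  have ev3: "\<exists>u. u \<noteq> 0 \<and> T *v u = l3 *\<^sub>R u" using ev[of 3] unfolding l3_def by simp
  have r1: "l1^3 - pe1 T * l1^2 + pe2 T * l1 - pe3 T = 0" using ev1 root_of_eig[OF cv] by blast
  have r2: "l2^3 - pe1 T * l2^2 + pe2 T * l2 - pe3 T = 0" using ev2 root_of_eig[OF cv] by blast
  have r3: "l3^3 - pe1 T * l3^2 + pe2 T * l3 - pe3 T = 0" using ev3 root_of_eig[OF cv] by blast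
  note V = vander[OF dist r1 r2 r3]
  have cubT: "cub T l1 l2 l3" unfolding cub_def using cv V by simp
  have Tsa: "\<forall>u v. omega (T *v u) v = omega u (T *v v)"
    using om_T[OF skT[unfolded T_def]] unfolding T_def by blast
  have f0eq: "f0 = (\<lambda>y. Jmat *v grad H0 y)" using f0_def by (intro ext) simp
  have Bt: "\<forall>w. transpose (B i) *v w = \<alpha> i *\<^sub>R w + \<beta> i *\<^sub>R (T *v w) + \<gamma> i *\<^sub>R (T *v (T *v w))"
    if i: "i \<in> {1,2,3}" for i
  proof -
    have "B i = \<alpha> i *\<^sub>R mat 1 + \<beta> i *\<^sub>R A + \<gamma> i *\<^sub>R (A ** A)" using B_def i by blast
    then have "transpose (B i) = \<alpha> i *\<^sub>R mat 1 + \<beta> i *\<^sub>R T + \<gamma> i *\<^sub>R (T ** T)"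
      by (simp add: transpose_add transpose_scalar transpose_mat matrix_transpose_mul T_def)
    then show ?thesis
      by (simp only: matrix_vector_mult_add_rdistrib scaleR_matrix_vector_assoc[symmetric] matrix_vector_mul_assoc[symmetric] matrix_vector_mul_lid) simp
  qed
  have sP: "Pj T l1 l2 l3 w + Pj T l2 l1 l3 w + Pj T l3 l1 l2 w = w" for w by (rule Pj_sum[OF dist])
  have ip: "\<alpha> i + \<beta> i * lam j + \<gamma> i * (lam j)^2 = (if i = j then -1 else 1)"
    if "i \<in> {1,2,3}" "j \<in> {1,2,3}" for i j using interp that by blast
  have m1: "(1::nat) \<in> {1,2,3}" and m2: "(2::nat) \<in> {1,2,3}" and m3: "(3::nat) \<in> {1,2,3}" by simp_all
  have B1: "\<forall>w. transpose (B 1) *v w = w - 2 *\<^sub>R Pj T l1 l2 l3 w"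
  proof
    fix w
    have "transpose (B 1) *v w = (-1) *\<^sub>R Pj T l1 l2 l3 w + 1 *\<^sub>R Pj T l2 l1 l3 w + 1 *\<^sub>R Pj T l3 l1 l2 w"
      unfolding Bt[OF m1, rule_format]
      by (rule Bact[OF cubT dist]) (use ip[of 1 1] ip[of 1 2] ip[of 1 3] in \<open>simp_all add: l1_def l2_def l3_def\<close>)
    then show "transpose (B 1) *v w = w - 2 *\<^sub>R Pj T l1 l2 l3 w"
      using sP[of w] by (rule lin3(1))
  qed
  have B2: "\<forall>w. transpose (B 2) *v w = w - 2 *\<^sub>R Pj T l2 l1 l3 w"
  proof
    fix w
    have "transpose (B 2) *v w = 1 *\<^sub>R Pj T l1 l2 l3 w + (-1) *\<^sub>R Pj T l2 l1 l3 w + 1 *\<^sub>R Pj T l3 l1 l2 w"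
      unfolding Bt[OF m2, rule_format]
      by (rule Bact[OF cubT dist]) (use ip[of 2 1] ip[of 2 2] ip[of 2 3] in \<open>simp_all add: l1_def l2_def l3_def\<close>)
    then show "transpose (B 2) *v w = w - 2 *\<^sub>R Pj T l2 l1 l3 w"
      using sP[of w] by (rule lin3(2))
  qed
  have B3: "\<forall>w. transpose (B 3) *v w = w - 2 *\<^sub>R Pj T l3 l1 l2 w"
  proof
    fix w
    have "transpose (B 3) *v w = 1 *\<^sub>R Pj T l1 l2 l3 w + 1 *\<^sub>R Pj T l2 l1 l3 w + (-1) *\<^sub>R Pj T l3 l1 l2 w"
      unfolding Bt[OF m3, rule_format]
      by (rule Bact[OF cubT dist]) (use ip[of 3 1] ip[of 3 2] ip[of 3 3] in \<open>simp_all add: l1_def l2_def l3_def\<close>)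
    then show "transpose (B 3) *v w = w - 2 *\<^sub>R Pj T l3 l1 l2 w"
      using sP[of w] by (rule lin3(3))
  qed
  show ?thesis
  proof (intro allI)
    fix x
    define S where "S = hess H0 x"
    define M where "M = jac f0 x"
    have Ssym: "transpose S = S" unfolding S_def by (rule calc(1)[OF H0_cubic])
    have MJS: "M = Jmat ** S" unfolding M_def S_def f0eq by (rule calc(2)[OF H0_cubic])
    have Mham: "\<forall>u v. omega (M *v u) v = - omega u (M *v v)"
      unfolding MJS using om_M[OF Ssym] by blast
    have ST: "S ** T = A ** S" using H0_comm unfolding S_def T_def by simp
    have comm: "M ** T = T ** M"
    proof -
      have "M ** T = Jmat ** (S ** T)" by (simp add: MJS matrix_mul_assoc)
      also have "\<dots> = (Jmat ** A) ** S" by (simp add: ST matrix_mul_assoc)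
      also have "\<dots> = (T ** Jmat) ** S" by (simp add: skewHam T_def)
      also have "\<dots> = T ** M" by (simp add: MJS matrix_mul_assoc)
      finally show ?thesis .
    qed
    obtain k1 k2 k3 where
      MM: "\<forall>w. M *v (M *v w) = k1 *\<^sub>R Pj T l1 l2 l3 w + k2 *\<^sub>R Pj T l2 l1 l3 w + k3 *\<^sub>R Pj T l3 l1 l2 w"
      and trMM: "trace (M ** M) = 2 * (k1 + k2 + k3)"
      and t1: "\<forall>X. (\<forall>w. X *v w = w - 2 *\<^sub>R Pj T l1 l2 l3 w) \<longrightarrow> trace (X ** (M ** M)) = 2 * (k1 + k2 + k3) - 4 * k1"
      and t2: "\<forall>X. (\<forall>w. X *v w = w - 2 *\<^sub>R Pj T l2 l1 l3 w) \<longrightarrow> trace (X ** (M ** M)) = 2 * (k1 + k2 + k3) - 4 * k2"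
      and t3: "\<forall>X. (\<forall>w. X *v w = w - 2 *\<^sub>R Pj T l3 l1 l2 w) \<longrightarrow> trace (X ** (M ** M)) = 2 * (k1 + k2 + k3) - 4 * k3"
      using core[OF dist cubT Tsa Mham comm ev1 ev2 ev3] by blast
    have tB1: "trace (transpose (B 1) ** (M ** M)) = 2 * (k1 + k2 + k3) - 4 * k1" using t1 B1 by blast
    have tB2: "trace (transpose (B 2) ** (M ** M)) = 2 * (k1 + k2 + k3) - 4 * k2" using t2 B2 by blast
    have tB3: "trace (transpose (B 3) ** (M ** M)) = 2 * (k1 + k2 + k3) - 4 * k3" using t3 B3 by blast
    have jacB: "jac (\<lambda>y. C *v f0 y) x = C ** M" for C
    proof -
      have "(\<lambda>y. C *v f0 y) = (\<lambda>y. (C ** Jmat) *v grad H0 y)"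
        by (simp add: f0eq matrix_vector_mul_assoc)
      then show ?thesis using calc(2)[OF H0_cubic, of "C ** Jmat" x]
        by (simp add: MJS S_def matrix_mul_assoc)
    qed
    have second: "trace (C ** (M ** M)) = trace (M ** jac (\<lambda>y. C *v f0 y) x)" for C
    proof -
      have "trace (M ** jac (\<lambda>y. C *v f0 y) x) = trace (M ** (C ** M))" by (simp add: jacB)
      also have "\<dots> = trace ((C ** M) ** M)" by (rule trace_mul_sym)
      also have "\<dots> = trace (C ** (M ** M))" by (simp add: matrix_mul_assoc)
      finally show ?thesis by simp
    qed
    have sum3: "(\<Sum>i\<in>{1,2,3::nat}. f i) = f 1 + (f 2 + f 3)" for f :: "nat \<Rightarrow> real^6^6"
      by simp
    have first: "M ** M = (1/8 * trace (M ** M)) *\<^sub>R mat 1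
            + (\<Sum>i\<in>{1,2,3::nat}. (1/8 * trace (transpose (B i) ** (M ** M))) *\<^sub>R transpose (B i))"
      unfolding matrix_eq
    proof
      fix w
      show "(M ** M) *v w = ((1/8 * trace (M ** M)) *\<^sub>R mat 1
            + (\<Sum>i\<in>{1,2,3::nat}. (1/8 * trace (transpose (B i) ** (M ** M))) *\<^sub>R transpose (B i))) *v w"
        unfolding sum3 tB1 tB2 tB3 trMM
        by (simp only: matrix_vector_mult_add_rdistrib scaleR_matrix_vector_assoc[symmetric]
            matrix_vector_mul_lid B1[rule_format] B2[rule_format] B3[rule_format]
            matrix_vector_mul_assoc[symmetric] MM[rule_format] final_alg[OF sP])
    qed
    show "jac f0 x ** jac f0 x =
            (1/8 * trace (jac f0 x ** jac f0 x)) *\<^sub>R mat 1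
            + (\<Sum>i\<in>{1,2,3::nat}. (1/8 * trace (transpose (B i) ** (jac f0 x ** jac f0 x)))
                                    *\<^sub>R transpose (B i))
         \<and> (\<forall>i\<in>{1,2,3::nat}.
              1/8 * trace (transpose (B i) ** (jac f0 x ** jac f0 x))
              = 1/8 * trace (jac f0 x ** jac (\<lambda>y. transpose (B i) *v f0 y) x))"
      using first second unfolding M_def by simp
  qed
qed

end
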